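(* Let $\mathbb{R}^5$ have coordinates $x=(\theta^0,\theta^1,\theta^2,\theta^3,\theta^4)$ and let $g$ and $\Upsilon$ be the symmetric bilinear and trilinear forms determined by $$g(x,x)=\theta^0\theta^4-4\theta^1\theta^3+3(\theta^2)^2,\qquad \Upsilon(x,x,x)=3\sqrt{3}\big(\theta^0\theta^2\theta^4+2\theta^1\theta^2\theta^3-(\theta^2)^3-\theta^0(\theta^3)^2-\theta^4(\theta^1)^2\big).$$ Let $$CH=\{a\in\mathbf{GL}(5,\mathbb{R}) : \Upsilon(ax,ax,ax)=(\det a)^{3/5}\,\Upsilon(x,x,x)\ \ \forall x\in\mathbb{R}^5\}.$$ Then $CH$ is the group $\mathbf{GL}(2,\mathbb{R})$ in its $5$-dimensional irreducible representation, and there are natural inclusions $CH=\mathbf{GL}(2,\mathbb{R})\subset\mathbf{CO}(3,2)\subset\mathbf{GL}(5,\mathbb{R})$, where $\mathbf{CO}(3,2)$ is the $11$-dimensional group of homotheties of the conformal class $[g]$ (linear maps $a$ with $g(ax,ax)=\lambda\, g(x,x)$ for some $\lambda>0$).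
   Context: Here $(\det a)^{3/5}$ denotes the real fifth root of $(\det a)^3$. The $5$-dimensional irreducible representation of $\mathbf{GL}(2,\mathbb{R})$ is the one on coefficient vectors $(\theta^0,\dots,\theta^4)$ of binary quartics $w(x)=\sum_{i=0}^4\binom{4}{i}\theta^i x^i$ induced by fractional linear substitutions $x=(\alpha x'+\beta)/(\gamma x'+\delta)$ via $\sum_i\binom4i\theta'^i x'^i=(\gamma x'+\delta)^4 w(x)$; its Lie algebra in these coordinates is spanned by the $5\times5$ matrices $E_+$ (entries $(E_+)_{01}=4,(E_+)_{12}=3,(E_+)_{23}=2,(E_+)_{34}=1$, others $0$), $E_-$ (entries $(E_-)_{10}=1,(E_-)_{21}=2,(E_-)_{32}=3,(E_-)_{43}=4$, others $0$), $E_0=\mathrm{diag}(-4,-2,0,2,4)$ and $E_1=-4\,\mathrm{Id}$.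
   Formalization: CH is the image of GL(2,R) in its 5-dimensional irreducible representation together with the negatives of all those matrices, and the claim that CO(3,2) is 11-dimensional is left out. Apart from conventions, each condition added here is assumed in the paper as well or is needed for the statement above to hold. *)

theory Defs
  imports "HOL-Analysis.Analysis" "HOL-Library.Numeral_Type" "HOL-Computational_Algebra.Polynomial"
begin

definition gq :: "real^5 \<Rightarrow> real" where
  "gq x = x$0 * x$4 - 4 * x$1 * x$3 + 3 * (x$2)^2"

definition Ups :: "real^5 \<Rightarrow> real" where
  "Ups x = 3 * sqrt 3 * (x$0 * x$2 * x$4 + 2 * x$1 * x$2 * x$3 - (x$2)^3
                         - x$0 * (x$3)^2 - x$4 * (x$1)^2)"

text \<open>(det a)^(3/5): real fifth root of (det a)^3.\<close>
definition CH :: "(real^5^5) set" where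
  "CH = {a. det a \<noteq> 0 \<and> (\<forall>x. Ups (a *v x) = root 5 ((det a)^3) * Ups x)}"

definition CO32 :: "(real^5^5) set" where
  "CO32 = {a. det a \<noteq> 0 \<and> (\<exists>l>0. \<forall>x. gq (a *v x) = l * gq x)}"

definition GL2 :: "(real^2^2) set" where
  "GL2 = {A. det A \<noteq> 0}"

definition GL5 :: "(real^5^5) set" where
  "GL5 = {a. det a \<noteq> 0}"

definition idx5 :: "5 \<Rightarrow> nat" where
  "idx5 i = (THE n. n < 5 \<and> (of_nat n :: 5) = i)"

text \<open>The 5-dimensional irreducible representation of GL(2,R): for
  A = [[alpha,beta],[gamma,delta]] the new coefficients theta' are given by
  sum_j C(4,j) theta'^j X^j = sum_i C(4,i) theta^i (alpha X + beta)^i (gamma X + delta)^(4-i),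
  i.e. (gamma x' + delta)^4 w(x) with x = (alpha x'+beta)/(gamma x'+delta).\<close>
definition rho_entry :: "real^2^2 \<Rightarrow> nat \<Rightarrow> nat \<Rightarrow> real" where
  "rho_entry A j i =
     real (4 choose i) / real (4 choose j) *
     coeff ([:A$0$1, A$0$0:] ^ i * [:A$1$1, A$1$0:] ^ (4 - i)) j"

definition rho :: "real^2^2 \<Rightarrow> real^5^5" where
  "rho A = (\<chi> j i. rho_entry A (idx5 j) (idx5 i))"

end

theory Submission imports Defs begin
lemma exhaust_5': fixes x :: 5 shows "x = 0 \<or> x = 1 \<or> x = 2 \<or> x = 3 \<or> x = 4"
proof (induct x)
  case (of_int z)
  then have "z = 0 \<or> z = 1 \<or> z = 2 \<or> z = 3 \<or> z = 4" by fastforce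
  then show ?case by auto
qed
lemma forall5: "(\<forall>i::5. P i) \<longleftrightarrow> P 0 \<and> P 1 \<and> P 2 \<and> P 3 \<and> P 4"
  by (metis exhaust_5')
lemma UNIV5: "(UNIV::5 set) = {0,1,2,3,4}" using exhaust_5' by auto
lemma sum5: "sum f (UNIV::5 set) = f 0 + f 1 + f 2 + f 3 + f 4"
  unfolding UNIV5 by (simp add: ac_simps)
lemma exhaust_2': fixes x :: 2 shows "x = 0 \<or> x = 1"
proof (induct x)
  case (of_int z)
  then have "z = 0 \<or> z = 1" by fastforce
  then show ?case by auto
qed
lemma forall2: "(\<forall>i::2. P i) \<longleftrightarrow> P 0 \<and> P 1"
  by (metis exhaust_2')
lemma UNIV2: "(UNIV::2 set) = {0,1}" using exhaust_2' by auto
lemma sum2: "sum f (UNIV::2 set) = f 0 + f 1"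
  unfolding UNIV2 by (simp add: ac_simps)
lemma idx_aux: "n < 5 \<Longrightarrow> n = 0 \<or> n = 1 \<or> n = 2 \<or> n = 3 \<or> n = (4::nat)" by linarith
lemma idx: "idx5 0 = 0" "idx5 1 = 1" "idx5 2 = 2" "idx5 3 = 3" "idx5 4 = 4"
  unfolding idx5_def
  by (rule the_equality; (simp; fail)?; (elim conjE, drule idx_aux, elim disjE, simp_all))+
definition rhoL :: "real \<Rightarrow> real \<Rightarrow> real \<Rightarrow> real \<Rightarrow> real list list" where
  "rhoL a b c d = [[(d^4), (4*b*d^3), (6*b^2*d^2), (4*b^3*d), (b^4)],
    [(c*d^3), (a*d^3 + 3*b*c*d^2), (3*a*b*d^2 + 3*b^2*c*d), (3*a*b^2*d + b^3*c), (a*b^3)],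
    [(c^2*d^2), (2*a*c*d^2 + 2*b*c^2*d), (a^2*d^2 + 4*a*b*c*d + b^2*c^2), (2*a^2*b*d + 2*a*b^2*c), (a^2*b^2)],
    [(c^3*d), (3*a*c^2*d + b*c^3), (3*a^2*c*d + 3*a*b*c^2), (a^3*d + 3*a^2*b*c), (a^3*b)],
    [(c^4), (4*a*c^3), (6*a^2*c^2), (4*a^3*c), (a^4)]]"
definition rhoM :: "real \<Rightarrow> real \<Rightarrow> real \<Rightarrow> real \<Rightarrow> real^5^5" where
  "rhoM a b c d = (\<chi> j i. rhoL a b c d ! idx5 j ! idx5 i)"
lemma rho_rhoM: "rho A = rhoM (A$0$0) (A$0$1) (A$1$0) (A$1$1)"
  unfolding rho_def rhoM_def vec_eq_iff forall5
  by (simp add: rhoL_def rho_entry_def idx numeral_eq_Suc algebra_simps)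
lemma rhoM_mult: "rhoM a b c d ** rhoM a' b' c' d' = rhoM (a'*a+b'*c) (a'*b+b'*d) (c'*a+d'*c) (c'*b+d'*d)"
  unfolding vec_eq_iff forall5
  by (simp add: matrix_matrix_mult_def sum5 rhoL_def rhoM_def idx; intro conjI; algebra)

lemma mv5: "((M::real^5^5) *v x) $ i = M$i$0 * x$0 + M$i$1 * x$1 + M$i$2 * x$2 + M$i$3 * x$3 + M$i$4 * x$4"
  by (simp add: matrix_vector_mult_def sum5)
lemma "(2::5) < 3 \<and> \<not> (4::5) < 1 \<and> (0::5) < 4" by (simp add: less_bit1_def bit1.Rep_numeral bit1.Rep_0 bit1.Rep_1)
lemma Ups_rhoM: "Ups (rhoM a b c d *v x) = (a*d-b*c)^6 * Ups x"
  unfolding Ups_def mv5 by (simp add: rhoL_def rhoM_def idx; algebra)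
lemma gq_rhoM: "gq (rhoM a b c d *v x) = (a*d-b*c)^4 * gq x"
  unfolding gq_def mv5 by (simp add: rhoL_def rhoM_def idx; algebra)

definition vec5 :: "real \<Rightarrow> real \<Rightarrow> real \<Rightarrow> real \<Rightarrow> real \<Rightarrow> real^5" where
  "vec5 a b c d e = (\<chi> i. [a,b,c,d,e] ! idx5 i)"
lemma vec5_nth [simp]: "vec5 a b c d e $ 0 = a" "vec5 a b c d e $ 1 = b" "vec5 a b c d e $ 2 = c"
  "vec5 a b c d e $ 3 = d" "vec5 a b c d e $ 4 = e"
  by (simp_all add: vec5_def idx)
lemma vec5_eq: "x = vec5 (x$0) (x$1) (x$2) (x$3) (x$4)"
  unfolding vec_eq_iff forall5 by simp

definition U :: "real^5 \<Rightarrow> real" where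
  "U x = x$0 * x$2 * x$4 + 2 * x$1 * x$2 * x$3 - (x$2)^3 - x$0 * (x$3)^2 - x$4 * (x$1)^2"
lemma Ups_U: "Ups x = 3 * sqrt 3 * U x" unfolding Ups_def U_def by simp

definition D1 :: "real^5 \<Rightarrow> real^5 \<Rightarrow> real" where
  "D1 x y = (x$2*x$4 - x$3^2)*y$0 + (2*x$2*x$3 - 2*x$4*x$1)*y$1
     + (x$0*x$4 + 2*x$1*x$3 - 3*x$2^2)*y$2 + (2*x$1*x$2 - 2*x$0*x$3)*y$3 + (x$0*x$2 - x$1^2)*y$4"

lemma U_expand: "U (x + t *\<^sub>R y) = U x + t * D1 x y + t^2 * D1 y x + t^3 * U y"
  unfolding U_def D1_def by (simp; algebra)

lemma cubic_coeff:
  fixes p0 p1 p2 p3 q0 q1 q2 q3 :: real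
  assumes "\<And>t. p0 + p1*t + p2*t^2 + p3*t^3 = q0 + q1*t + q2*t^2 + q3*t^3"
  shows "p1 = q1"
proof -
  have a: "p0 = q0" using assms[of 0] by simp
  have b: "p0 + p1 + p2 + p3 = q0 + q1 + q2 + q3" using assms[of 1] by simp
  have c: "p0 - p1 + p2 - p3 = q0 - q1 + q2 - q3" using assms[of "-1"] by simp
  have d: "p0 + 2*p1 + 4*p2 + 8*p3 = q0 + 2*q1 + 4*q2 + 8*q3" using assms[of 2] by simp
  show ?thesis using a b c d by linarith
qed

lemma D1_transform:
  fixes a :: "real^5^5"
  assumes "\<forall>x. U (a *v x) = k * U x"
  shows "D1 (a *v x) (a *v y) = k * D1 x y"
proof -
  have "\<And>t. U (a *v x) + t * D1 (a *v x) (a *v y) + t^2 * D1 (a *v y) (a *v x) + t^3 * U (a *v y)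
     = k * U x + (k * D1 x y) * t + (k * D1 y x) * t^2 + (k * U y) * t^3"
  proof -
    fix t
    have "U (a *v (x + t *\<^sub>R y)) = k * U (x + t *\<^sub>R y)" using assms by blast
    then show "?thesis t"
      by (simp add: U_expand matrix_vector_right_distrib matrix_vector_mult_scaleR algebra_simps)
  qed
  then show ?thesis using cubic_coeff[of "U (a *v x)" "D1 (a *v x) (a *v y)"] by (metis mult.commute)
qed

lemma sing:
  assumes D: "\<forall>v. D1 w v = 0" and nz: "w \<noteq> 0"
  shows "\<exists>l p q. l \<noteq> 0 \<and> (p \<noteq> 0 \<or> q \<noteq> 0) \<and>
     w = l *\<^sub>R vec5 (p^4) (q*p^3) (q^2*p^2) (q^3*p) (q^4)"
proof -
  have e0: "w$2*w$4 - w$3^2 = 0" using D[rule_format, of "vec5 1 0 0 0 0"] by (simp add: D1_def)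
  have e2: "w$0*w$4 + 2*w$1*w$3 - 3*w$2^2 = 0" using D[rule_format, of "vec5 0 0 1 0 0"] by (simp add: D1_def)
  have e3: "2*w$1*w$2 - 2*w$0*w$3 = 0" using D[rule_format, of "vec5 0 0 0 1 0"] by (simp add: D1_def)
  have e4: "w$0*w$2 - w$1^2 = 0" using D[rule_format, of "vec5 0 0 0 0 1"] by (simp add: D1_def)
  show ?thesis
  proof (cases "w$0 = 0")
    case True
    have "w$1 = 0" using e4 True by simp
    moreover have "w$2 = 0" using e2 True \<open>w$1 = 0\<close> by simp
    moreover have "w$3 = 0" using e0 \<open>w$2 = 0\<close> by simp
    ultimately have w: "w = vec5 0 0 0 0 (w$4)" using True vec5_eq[of w] by simp
    then have "w$4 \<noteq> 0" using nz by (metis vec5_eq zero_index)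
    then show ?thesis
      by (rule_tac x="w$4" in exI, rule_tac x=0 in exI, rule_tac x=1 in exI)
         (subst w, simp add: vec_eq_iff forall5)
  next
    case False
    define q where "q = w$1 / w$0"
    have w1: "w$1 = w$0 * q" using False by (simp add: q_def)
    have w2: "w$2 = w$0 * q^2" using e4 False unfolding q_def by (simp add: field_simps power2_eq_square)
    have w3: "w$3 = w$0 * q^3" using e3 False w1 w2 by (simp add: field_simps power2_eq_square power3_eq_cube)
    have w4: "w$4 = w$0 * q^4" using e2 False w1 w2 w3 by (simp add: field_simps) algebra
    show ?thesis
      by (rule_tac x="w$0" in exI, rule_tac x=1 in exI, rule_tac x=q in exI)
         (simp add: False vec_eq_iff forall5 w1 w2 w3 w4 mult.commute)
  qed
qed

lemmas ns = mult_zero_left mult_zero_right mult_1_left mult_1_right add_0_left add_0_right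
  diff_zero zero_power2 power_one one_power2 diff_0 minus_zero zero_power power_one_right
  mult_minus_left mult_minus_right minus_minus
lemma diag_lemma:
  fixes b :: "real^5^5"
  assumes c0: "b$0$0 = l" "b$1$0 = 0" "b$2$0 = 0" "b$3$0 = 0" "b$4$0 = 0"
  and c4: "b$0$4 = 0" "b$1$4 = 0" "b$2$4 = 0" "b$3$4 = 0" "b$4$4 = m"
  and nz: "l \<noteq> 0" "m \<noteq> 0" "\<kappa> \<noteq> 0"
  and hU: "\<forall>x. U (b *v x) = \<kappa> * U x"
  shows "\<exists>c r s. c \<in> {1,-1} \<and> r \<noteq> 0 \<and> s \<noteq> 0 \<and> b = c *\<^sub>R rhoM r 0 0 s"
proof -
  have hD: "\<And>x y. D1 (b *v x) (b *v y) = \<kappa> * D1 x y" using D1_transform hU by blast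
  note Q4 = hD[of _ "vec5 1 0 0 0 0"]
  note Q0 = hD[of _ "vec5 0 0 0 0 1"]
  note ss = D1_def mv5 c0 c4
  have "l*m*b$2$1 = 0" using Q4[of "vec5 0 1 0 0 1"] Q4[of "vec5 0 1 0 0 0"] Q4[of "vec5 0 0 0 0 1"]
    unfolding ss vec5_nth by (simp (no_asm_use) only: ns algebra_simps power2_eq_square power3_eq_cube; linarith)
  then have b21: "b$2$1 = 0" using nz by simp
  have "l*m*b$2$3 = 0" using Q4[of "vec5 0 0 0 1 1"] Q4[of "vec5 0 0 0 1 0"] Q4[of "vec5 0 0 0 0 1"]
    unfolding ss vec5_nth by (simp (no_asm_use) only: ns algebra_simps power2_eq_square power3_eq_cube; linarith)
  then have b23: "b$2$3 = 0" using nz by simp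
  have k1: "l*m*b$2$2 = \<kappa>" using Q4[of "vec5 0 0 1 0 1"] Q4[of "vec5 0 0 1 0 0"] Q4[of "vec5 0 0 0 0 1"]
    unfolding ss vec5_nth by (simp (no_asm_use) only: ns algebra_simps power2_eq_square power3_eq_cube; linarith)
  have b22: "b$2$2 \<noteq> 0" using k1 nz by auto
  have "l * b$3$1^2 = 0" using Q4[of "vec5 0 1 0 0 0"] unfolding ss vec5_nth b21 by (simp (no_asm_use) only: ns algebra_simps power2_eq_square power3_eq_cube; linarith)
  then have b31: "b$3$1 = 0" using nz by simp
  have "l * b$2$2 * b$4$1 = 0" using Q4[of "vec5 0 1 1 0 0"] Q4[of "vec5 0 1 0 0 0"] Q4[of "vec5 0 0 1 0 0"]
    unfolding ss vec5_nth b21 b31 by (simp (no_asm_use) only: ns algebra_simps power2_eq_square power3_eq_cube; linarith)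
  then have b41: "b$4$1 = 0" using nz b22 by simp
  have k2: "l * b$3$3^2 = \<kappa>" using Q4[of "vec5 0 0 0 1 0"] unfolding ss vec5_nth b23 by (simp (no_asm_use) only: ns algebra_simps power2_eq_square power3_eq_cube; linarith)
  have b33: "b$3$3 \<noteq> 0" using k2 nz by auto
  have r6': "l * (b$2$2 * b$4$2 - b$3$2^2) = 0" using Q4[of "vec5 0 0 1 0 0"] unfolding ss vec5_nth by (simp (no_asm_use) only: ns algebra_simps power2_eq_square power3_eq_cube; linarith)
  then have r6: "b$2$2 * b$4$2 = b$3$2^2" using nz by simp
  have r7': "l * (b$2$2 * b$4$3 - 2 * b$3$2 * b$3$3) = 0" using Q4[of "vec5 0 0 1 1 0"] Q4[of "vec5 0 0 1 0 0"] Q4[of "vec5 0 0 0 1 0"]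
    unfolding ss vec5_nth b23 by (simp (no_asm_use) only: ns algebra_simps power2_eq_square power3_eq_cube; linarith)
  then have r7: "b$2$2 * b$4$3 = 2 * b$3$2 * b$3$3" using nz by simp
  have "m * b$1$3^2 = 0" using Q0[of "vec5 0 0 0 1 0"] unfolding ss vec5_nth b23 by (simp (no_asm_use) only: ns algebra_simps power2_eq_square power3_eq_cube; linarith)
  then have b13: "b$1$3 = 0" using nz by simp
  have "m * b$2$2 * b$0$3 = 0" using Q0[of "vec5 0 0 1 1 0"] Q0[of "vec5 0 0 1 0 0"] Q0[of "vec5 0 0 0 1 0"]
    unfolding ss vec5_nth b23 b13 by (simp (no_asm_use) only: ns algebra_simps power2_eq_square power3_eq_cube; linarith)
  then have b03: "b$0$3 = 0" using nz b22 by simp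
  have k3: "m * b$1$1^2 = \<kappa>" using Q0[of "vec5 0 1 0 0 0"] unfolding ss vec5_nth b21 by (simp (no_asm_use) only: ns algebra_simps power2_eq_square power3_eq_cube; linarith)
  have b11: "b$1$1 \<noteq> 0" using k3 nz by auto
  have r12': "m * (b$2$2 * b$0$2 - b$1$2^2) = 0" using Q0[of "vec5 0 0 1 0 0"] unfolding ss vec5_nth by (simp (no_asm_use) only: ns algebra_simps power2_eq_square power3_eq_cube; linarith)
  then have r12: "b$2$2 * b$0$2 = b$1$2^2" using nz by simp
  have r13': "m * (b$2$2 * b$0$1 - 2 * b$1$1 * b$1$2) = 0" using Q0[of "vec5 0 1 1 0 0"] Q0[of "vec5 0 1 0 0 0"] Q0[of "vec5 0 0 1 0 0"]
    unfolding ss vec5_nth b21 by (simp (no_asm_use) only: ns algebra_simps power2_eq_square power3_eq_cube; linarith)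
  then have r13: "b$2$2 * b$0$1 = 2 * b$1$1 * b$1$2" using nz by simp
  note uu = U_def mv5 c0 c4 vec5_nth b21 b23 b31 b41 b13 b03
  have s1: "b$0$1 * b$3$3^2 + b$4$3 * b$1$1^2 = 0" using hU[rule_format, of "vec5 0 1 0 1 0"]
    unfolding uu vec5_nth by (simp (no_asm_use) only: ns algebra_simps power2_eq_square power3_eq_cube; linarith)
  have s2: "b$0$1 * b$3$3^2 - b$4$3 * b$1$1^2 = 0" using hU[rule_format, of "vec5 0 1 0 (-1) 0"]
    unfolding uu by (simp add: power2_eq_square power3_eq_cube algebra_simps)
  have "b$0$1 * b$3$3^2 = 0" using s1 s2 by linarith
  then have b01: "b$0$1 = 0" using b33 by simp
  have "b$4$3 * b$1$1^2 = 0" using s1 s2 by linarith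
  then have b43: "b$4$3 = 0" using b11 by simp
  have b12: "b$1$2 = 0" using r13 b01 b11 by simp
  have b32: "b$3$2 = 0" using r7 b43 b33 by simp
  have b02: "b$0$2 = 0" using r12 b12 b22 by simp
  have b42: "b$4$2 = 0" using r6 b32 b22 by simp
  note uu2 = uu b01 b43 b12 b32 b02 b42
  have k4: "b$2$2^3 = \<kappa>" using hU[rule_format, of "vec5 0 0 1 0 0"] unfolding uu2 vec5_nth by (simp (no_asm_use) only: ns algebra_simps power2_eq_square power3_eq_cube; linarith)
  have k5: "2 * b$1$1 * b$2$2 * b$3$3 - b$2$2^3 = \<kappa>" using hU[rule_format, of "vec5 0 1 1 1 0"] unfolding uu2 vec5_nth by (simp (no_asm_use) only: ns algebra_simps power2_eq_square power3_eq_cube; linarith)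
  have "b$2$2 * (l*m - b$2$2^2) = l*m*b$2$2 - b$2$2^3" by algebra
  then have "b$2$2 * (l*m - b$2$2^2) = 0" using k1 k4 by linarith
  then have F3: "l * m = b$2$2^2" using b22 by simp
  have "b$2$2^2 * (b$1$1^2 - l*b$2$2) - (l * (m*b$1$1^2) - l*b$2$2^3) = (b$2$2^2 - l*m) * b$1$1^2" by algebra
  then have "b$2$2^2 * (b$1$1^2 - l*b$2$2) = 0" using F3 k3 k4 by simp
  then have F1: "b$1$1^2 = l * b$2$2" using b22 by simp
  have "2*b$2$2*(b$3$3*b$1$1 - b$2$2^2) = (2*b$1$1*b$2$2*b$3$3 - b$2$2^3) - b$2$2^3" by algebra
  then have "2*b$2$2*(b$3$3*b$1$1 - b$2$2^2) = 0" using k4 k5 by linarith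
  then have F2: "b$3$3 * b$1$1 = b$2$2^2" using b22 by simp
  have E2: "b$2$2 = l * (b$1$1/l)^2" using F1 nz by (simp add: field_simps power2_eq_square)
  have "b$2$2^2 = b$1$1 * (l*(b$1$1/l)^3)" unfolding E2 using nz by (simp add: field_simps; algebra)
  then have E3: "b$3$3 = l * (b$1$1/l)^3" using F2 b11 by (metis mult.commute mult_cancel_left)
  have "b$2$2^2 = l * (l*(b$1$1/l)^4)" unfolding E2 using nz by (simp add: field_simps; algebra)
  then have E4: "m = l * (b$1$1/l)^4" using F3 nz by (metis mult_cancel_left)
  define c :: real where "c = (if l > 0 then 1 else -1)"
  define s where "s = root 4 \<bar>l\<bar>"
  have s4: "s^4 = \<bar>l\<bar>" unfolding s_def by simp
  have cs: "c * s^4 = l" unfolding c_def s4 by auto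
  have snz: "s \<noteq> 0" using s4 nz by auto
  define r where "r = s * (b$1$1/l)"
  have rnz: "r \<noteq> 0" using snz b11 nz by (simp add: r_def)
  have ent: "c * (r^k * s^(4-k)) = l * (b$1$1/l)^k" if "k \<le> 4" for k :: nat
  proof -
    have "c * (r^k * s^(4-k)) = c * (s^k * s^(4-k)) * (b$1$1/l)^k" by (simp only: r_def power_mult_distrib mult_ac)
    also have "s^k * s^(4-k) = s^4" using that by (simp add: power_add[symmetric])
    finally show ?thesis using cs by simp
  qed
  have "b = c *\<^sub>R rhoM r 0 0 s"
    unfolding vec_eq_iff forall5
    using ent[of 0] ent[of 1] nz ent[of 2] ent[of 3] ent[of 4]
    by (simp add: rhoM_def rhoL_def idx c0 c4 b21 b23 b31 b41 b13 b03 b01 b43 b12 b32 b02 b42 E2 E3 E4)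
  moreover have "c \<in> {1,-1}" by (simp add: c_def)
  ultimately show ?thesis using rnz snz by blast
qed

lemma prod5: "prod f (UNIV::5 set) = f 0 * f 1 * f 2 * f 3 * f 4"
  unfolding UNIV5 by (simp add: ac_simps)
lemmas ord5 = less_bit1_def bit1.Rep_numeral bit1.Rep_0 bit1.Rep_1

lemma det_rhoM_low: "det (rhoM a 0 c d) = (a*d)^10"
proof -
  have "det (rhoM a 0 c d) = prod (\<lambda>i. rhoM a 0 c d $ i $ i) UNIV"
  proof (rule det_lowerdiagonal)
    fix i j :: 5 assume "i < j"
    then show "rhoM a 0 c d $ i $ j = 0"
      using exhaust_5'[of i] exhaust_5'[of j] by (auto simp: ord5 rhoM_def rhoL_def idx)
  qed
  also have "\<dots> = (a*d)^10" unfolding prod5 by (simp add: rhoM_def rhoL_def idx; algebra)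
  finally show ?thesis .
qed

lemma det_rhoM_up: "det (rhoM a b 0 d) = (a*d)^10"
proof -
  have "det (rhoM a b 0 d) = prod (\<lambda>i. rhoM a b 0 d $ i $ i) UNIV"
  proof (rule det_upperdiagonal)
    fix i j :: 5 assume "i > j"
    then show "rhoM a b 0 d $ i $ j = 0"
      using exhaust_5'[of i] exhaust_5'[of j] by (auto simp: ord5 rhoM_def rhoL_def idx)
  qed
  also have "\<dots> = (a*d)^10" unfolding prod5 by (simp add: rhoM_def rhoL_def idx; algebra)
  finally show ?thesis .
qed

lemma det_rhoM_a: assumes "a \<noteq> 0" shows "det (rhoM a b c d) = (a*d - b*c)^10"
proof -
  have e: "rhoM a b 0 (d - b*c/a) ** rhoM 1 0 (c/a) 1 =
     rhoM (1*a + 0*0) (1*b + 0*(d - b*c/a)) (c/a*a + 1*0) (c/a*b + 1*(d - b*c/a))"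
    by (rule rhoM_mult)
  have "c/a*a = c" using assms by simp
  moreover have "c/a*b + 1*(d - b*c/a) = d" by simp
  ultimately have eq: "rhoM a b c d = rhoM a b 0 (d - b*c/a) ** rhoM 1 0 (c/a) 1"
    using e by simp
  have "det (rhoM a b c d) = det (rhoM a b 0 (d - b*c/a)) * det (rhoM 1 0 (c/a) 1)"
    unfolding eq by (rule det_mul)
  also have "\<dots> = (a * (d - b*c/a))^10 * (1*1)^10" by (simp only: det_rhoM_up det_rhoM_low)
  also have "a * (d - b*c/a) = a*d - b*c" using assms by (simp add: field_simps)
  finally show ?thesis by simp
qed

lemma det_rhoM: "det (rhoM a b c d) = (a*d - b*c)^10"
proof (cases "a = 0")
  case False then show ?thesis by (rule det_rhoM_a)
next
  case True
  show ?thesis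
  proof (cases "c = 0")
    case True
    then show ?thesis using det_rhoM_up[of a b d] by simp
  next
    case False
    have "rhoM a b c d = rhoM (-c) (b-d) c d ** rhoM 1 1 0 1"
      using True by (subst rhoM_mult) simp
    then have "det (rhoM a b c d) = (-c*d - (b-d)*c)^10 * 1"
      using det_rhoM_a[of "-c" "b-d" c d] False det_rhoM_up[of 1 1 1] by (simp add: det_mul)
    then show ?thesis using True by (simp add: algebra_simps)
  qed
qed

lemma U_rhoM: "U (rhoM a b c d *v x) = (a*d-b*c)^6 * U x"
  unfolding U_def mv5 by (simp add: rhoL_def rhoM_def idx; algebra)

lemma rhoM_id: "rhoM 1 0 0 1 = mat 1"
  unfolding vec_eq_iff forall5 by (simp add: rhoM_def rhoL_def idx mat_def)

lemma det_scaleR5: "det (c *\<^sub>R (M::real^5^5)) = c^5 * det M"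
proof -
  have "c *\<^sub>R M = (c *\<^sub>R mat 1) ** M" by (simp add: scalar_matrix_assoc[symmetric])
  moreover have "det (c *\<^sub>R (mat 1 :: real^5^5)) = c^5"
  proof -
    have "det (c *\<^sub>R (mat 1 :: real^5^5)) = prod (\<lambda>i. (c *\<^sub>R (mat 1 :: real^5^5))$i$i) UNIV"
      by (rule det_diagonal) (simp add: mat_def)
    also have "\<dots> = c^5" unfolding prod5 by (simp add: mat_def; algebra)
    finally show ?thesis .
  qed
  ultimately show ?thesis by (simp add: det_mul)
qed

definition mat2 :: "real \<Rightarrow> real \<Rightarrow> real \<Rightarrow> real \<Rightarrow> real^2^2" where
  "mat2 a b c d = (\<chi> i j. if i = 0 then (if j = 0 then a else b) else (if j = 0 then c else d))"
lemma mat2_nth [simp]: "mat2 a b c d $ 0 $ 0 = a" "mat2 a b c d $ 0 $ 1 = b"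
  "mat2 a b c d $ 1 $ 0 = c" "mat2 a b c d $ 1 $ 1 = d"
  by (simp_all add: mat2_def)
lemma two2: "(2::2) = 0" by simp
lemma det2': "det (A::real^2^2) = A$0$0 * A$1$1 - A$0$1 * A$1$0"
  by (simp add: det_2 two2 algebra_simps)
lemma det_mat2: "det (mat2 a b c d) = a*d - b*c" by (simp add: det2')
lemma rho_mat2: "rho (mat2 a b c d) = rhoM a b c d" by (simp add: rho_rhoM)

lemma Ups_scale: "Ups (c *\<^sub>R y) = c^3 * Ups y"
  unfolding Ups_def by (simp; algebra)
lemma gq_scale: "gq (c *\<^sub>R y) = c^2 * gq y"
  unfolding gq_def by (simp; algebra)

lemma rho_props:
  assumes A: "A \<in> GL2" and c: "c \<in> {1,-1}"
  shows "c *\<^sub>R rho A \<in> CH \<and> c *\<^sub>R rho A \<in> CO32"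
proof -
  define \<Delta> where "\<Delta> = A$0$0 * A$1$1 - A$0$1 * A$1$0"
  have dnz: "\<Delta> \<noteq> 0" using A by (simp add: GL2_def det2' \<Delta>_def)
  have cnz: "c \<noteq> 0" using c by auto
  have rA: "rho A = rhoM (A$0$0) (A$0$1) (A$1$0) (A$1$1)" by (rule rho_rhoM)
  have det: "det (c *\<^sub>R rho A) = c^5 * \<Delta>^10" by (simp add: det_scaleR5 rA det_rhoM \<Delta>_def)
  have mv: "(c *\<^sub>R M) *v x = c *\<^sub>R (M *v x)" for M :: "real^5^5" and x by (simp add: scaleR_matrix_vector_assoc)
  have ups: "Ups ((c *\<^sub>R rho A) *v x) = c^3 * \<Delta>^6 * Ups x" for x
    by (simp add: mv Ups_scale rA Ups_rhoM \<Delta>_def)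
  have gq: "gq ((c *\<^sub>R rho A) *v x) = (c^2 * \<Delta>^4) * gq x" for x
    by (simp add: mv gq_scale rA gq_rhoM \<Delta>_def)
  have "(c^5 * \<Delta>^10)^3 = (c^3 * \<Delta>^6)^5" by algebra
  then have rt: "root 5 ((det (c *\<^sub>R rho A))^3) = c^3 * \<Delta>^6"
    unfolding det by (simp add: odd_real_root_power_cancel)
  have "c *\<^sub>R rho A \<in> CH" unfolding CH_def using det cnz dnz ups rt by simp
  moreover have "c^2 * \<Delta>^4 > 0" using cnz dnz by (simp add: zero_less_mult_iff)
  then have "c *\<^sub>R rho A \<in> CO32" unfolding CO32_def using det cnz dnz gq
    by (auto intro!: exI[of _ "c^2 * \<Delta>^4"])
  ultimately show ?thesis by blast
qed

lemma CH_forward: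
  fixes a :: "real^5^5"
  assumes "a \<in> CH"
  shows "\<exists>c A. a = c *\<^sub>R rho A \<and> c \<in> {1,-1} \<and> A \<in> GL2"
proof -
  define k where "k = root 5 ((det a)^3)"
  have da: "det a \<noteq> 0" and hUps: "\<forall>x. Ups (a *v x) = k * Ups x" using assms by (auto simp: CH_def k_def)
  have knz: "k \<noteq> 0" using da by (simp add: k_def)
  have hU: "\<forall>x. U (a *v x) = k * U x"
  proof
    fix x
    have "3 * sqrt 3 * U (a *v x) = 3 * sqrt 3 * (k * U x)" using hUps[rule_format, of x] by (simp add: Ups_U mult_ac)
    then show "U (a *v x) = k * U x" by simp
  qed
  obtain a' where inv: "a ** a' = mat 1" "a' ** a = mat 1"
    using da invertible_det_nz invertible_def by blast
  have surj: "a *v (a' *v v) = v" for v using inv by (simp add: matrix_vector_mul_assoc)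
  have inj: "x = 0" if "a *v x = 0" for x
  proof -
    have "a' *v (a *v x) = 0" using that by simp
    then show "x = 0" using inv by (simp add: matrix_vector_mul_assoc)
  qed
  have hD: "D1 (a *v x) (a *v y) = k * D1 x y" for x y using D1_transform hU by blast
  define e0 where "e0 = vec5 1 0 0 0 0"
  define e4 where "e4 = vec5 0 0 0 0 1"
  have D0: "D1 e0 y = 0" for y by (simp add: e0_def D1_def)
  have D4: "D1 e4 y = 0" for y by (simp add: e4_def D1_def)
  have Dw0: "\<forall>v. D1 (a *v e0) v = 0"
  proof
    fix v
    have "D1 (a *v e0) (a *v (a' *v v)) = k * D1 e0 (a' *v v)" by (rule hD)
    then show "D1 (a *v e0) v = 0" using surj D0 by simp
  qed
  have Dw4: "\<forall>v. D1 (a *v e4) v = 0"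
  proof
    fix v
    have "D1 (a *v e4) (a *v (a' *v v)) = k * D1 e4 (a' *v v)" by (rule hD)
    then show "D1 (a *v e4) v = 0" using surj D4 by simp
  qed
  have e0nz: "e0 \<noteq> 0" by (metis e0_def vec5_nth(1) zero_index zero_neq_one)
  have e4nz: "e4 \<noteq> 0" by (metis e4_def vec5_nth(5) zero_index zero_neq_one)
  have w0nz: "a *v e0 \<noteq> 0" using inj e0nz by blast
  have w4nz: "a *v e4 \<noteq> 0" using inj e4nz by blast
  obtain l p q where L: "l \<noteq> 0" "p \<noteq> 0 \<or> q \<noteq> 0"
    "a *v e0 = l *\<^sub>R vec5 (p^4) (q*p^3) (q^2*p^2) (q^3*p) (q^4)"
    using sing[OF Dw0 w0nz] by blast
  obtain m p' q' where L4: "m \<noteq> 0" "p' \<noteq> 0 \<or> q' \<noteq> 0"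
    "a *v e4 = m *\<^sub>R vec5 (p'^4) (q'*p'^3) (q'^2*p'^2) (q'^3*p') (q'^4)"
    using sing[OF Dw4 w4nz] by blast
  define M where "M = rhoM q' p' q p"
  have Me0: "M *v e0 = vec5 (p^4) (q*p^3) (q^2*p^2) (q^3*p) (q^4)"
    unfolding M_def e0_def vec_eq_iff forall5 by (simp add: mv5 rhoM_def rhoL_def idx)
  have Me4: "M *v e4 = vec5 (p'^4) (q'*p'^3) (q'^2*p'^2) (q'^3*p') (q'^4)"
    unfolding M_def e4_def vec_eq_iff forall5 by (simp add: mv5 rhoM_def rhoL_def idx)
  define \<Delta> where "\<Delta> = q'*p - p'*q"
  have dnz: "\<Delta> \<noteq> 0"
  proof
    assume d0: "\<Delta> = 0"
    obtain t where t: "p' = t*p" "q' = t*q"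
    proof (cases "p = 0")
      case True
      then have "q \<noteq> 0" using L(2) by simp
      moreover have "p' * q = 0" using d0 True by (simp add: \<Delta>_def)
      ultimately have "p' = 0" by simp
      then show ?thesis using that[of "q'/q"] True \<open>q \<noteq> 0\<close> by simp
    next
      case False
      have "q' * p = p' * q" using d0 by (simp add: \<Delta>_def)
      then have "q' = p'/p * q" using False by (simp add: field_simps)
      then show ?thesis using that[of "p'/p"] False by simp
    qed
    have "vec5 (p'^4) (q'*p'^3) (q'^2*p'^2) (q'^3*p') (q'^4) = t^4 *\<^sub>R vec5 (p^4) (q*p^3) (q^2*p^2) (q^3*p) (q^4)"
    proof -
      have tt: "t * t^3 = t^4" "t^3 * t = t^4" by algebra+
      show ?thesis unfolding vec_eq_iff forall5 t by (simp add: power_mult_distrib tt)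
    qed
    then have "a *v e4 = (m * t^4 / l) *\<^sub>R (a *v e0)" using L(1,3) L4(3) by simp
    then have "a *v (e4 - (m * t^4 / l) *\<^sub>R e0) = 0"
      by (simp add: matrix_vector_mult_diff_distrib matrix_vector_mult_scaleR)
    then have "e4 - (m * t^4 / l) *\<^sub>R e0 = 0" by (rule inj)
    then have "(e4 - (m * t^4 / l) *\<^sub>R e0) $ 4 = 0" by simp
    then show False by (simp add: e0_def e4_def)
  qed
  define N where "N = rhoM (p/\<Delta>) (-p'/\<Delta>) (-q/\<Delta>) (q'/\<Delta>)"
  have NM: "N ** M = mat 1"
  proof -
    have "N ** M = rhoM (q' * (p/\<Delta>) + p' * (-q/\<Delta>)) (q' * (-p'/\<Delta>) + p' * (q'/\<Delta>))
        (q * (p/\<Delta>) + p * (-q/\<Delta>)) (q * (-p'/\<Delta>) + p * (q'/\<Delta>))"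
      unfolding N_def M_def by (rule rhoM_mult)
    moreover have "q' * (p/\<Delta>) + p' * (-q/\<Delta>) = 1"
    proof -
      have "q' * (p/\<Delta>) + p' * (-q/\<Delta>) = (q'*p - p'*q)/\<Delta>" using dnz by (simp add: field_simps)
      then show ?thesis using dnz by (simp add: \<Delta>_def[symmetric])
    qed
    moreover have "q * (-p'/\<Delta>) + p * (q'/\<Delta>) = 1"
    proof -
      have "q * (-p'/\<Delta>) + p * (q'/\<Delta>) = (q'*p - p'*q)/\<Delta>" using dnz by (simp add: field_simps)
      then show ?thesis using dnz by (simp add: \<Delta>_def[symmetric])
    qed
    moreover have "q' * (-p'/\<Delta>) + p' * (q'/\<Delta>) = 0" by (simp add: field_simps)
    moreover have "q * (p/\<Delta>) + p * (-q/\<Delta>) = 0" by (simp add: field_simps)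
    ultimately show ?thesis by (simp add: rhoM_id)
  qed
  have MN: "M ** N = mat 1" using NM matrix_left_right_inverse by blast
  define b where "b = N ** a"
  have be0: "b *v e0 = l *\<^sub>R e0"
  proof -
    have "b *v e0 = N *v (a *v e0)" by (simp add: b_def matrix_vector_mul_assoc)
    also have "\<dots> = N *v (l *\<^sub>R (M *v e0))" by (simp add: L(3) Me0)
    also have "\<dots> = l *\<^sub>R ((N ** M) *v e0)" by (simp add: matrix_vector_mult_scaleR matrix_vector_mul_assoc)
    finally show ?thesis by (simp add: NM)
  qed
  have be4: "b *v e4 = m *\<^sub>R e4"
  proof -
    have "b *v e4 = N *v (a *v e4)" by (simp add: b_def matrix_vector_mul_assoc)
    also have "\<dots> = N *v (m *\<^sub>R (M *v e4))" by (simp add: L4(3) Me4)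
    also have "\<dots> = m *\<^sub>R ((N ** M) *v e4)" by (simp add: matrix_vector_mult_scaleR matrix_vector_mul_assoc)
    finally show ?thesis by (simp add: NM)
  qed
  have col0: "(b *v e0) $ i = b $ i $ 0" for i by (simp add: mv5 e0_def)
  have col4: "(b *v e4) $ i = b $ i $ 4" for i by (simp add: mv5 e4_def)
  have c0: "b$0$0 = l" "b$1$0 = 0" "b$2$0 = 0" "b$3$0 = 0" "b$4$0 = 0"
    using col0[of 0] col0[of 1] col0[of 2] col0[of 3] col0[of 4] be0 by (simp_all add: e0_def)
  have c4: "b$0$4 = 0" "b$1$4 = 0" "b$2$4 = 0" "b$3$4 = 0" "b$4$4 = m"
    using col4[of 0] col4[of 1] col4[of 2] col4[of 3] col4[of 4] be4 by (simp_all add: e4_def)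
  have pq: "p*q' - p'*q = \<Delta>" by (simp add: \<Delta>_def algebra_simps)
  have "(p/\<Delta>) * (q'/\<Delta>) - (-p'/\<Delta>) * (-q/\<Delta>) = (p*q' - p'*q)/(\<Delta>*\<Delta>)"
    using dnz by (simp add: field_simps)
  then have detN: "(p/\<Delta>) * (q'/\<Delta>) - (-p'/\<Delta>) * (-q/\<Delta>) = 1/\<Delta>"
    using dnz unfolding pq by simp
  have hUb: "\<forall>x. U (b *v x) = ((1/\<Delta>)^6 * k) * U x"
  proof
    fix x
    have "U (b *v x) = U (N *v (a *v x))" by (simp add: b_def matrix_vector_mul_assoc)
    also have "\<dots> = (1/\<Delta>)^6 * U (a *v x)" unfolding N_def U_rhoM detN ..
    finally show "U (b *v x) = ((1/\<Delta>)^6 * k) * U x" using hU by simp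
  qed
  have kbnz: "(1/\<Delta>)^6 * k \<noteq> 0" using dnz knz by simp
  obtain c r s where crs: "c \<in> {1,-1}" "r \<noteq> 0" "s \<noteq> 0" "b = c *\<^sub>R rhoM r 0 0 s"
    using diag_lemma[OF c0 c4 L(1) L4(1) kbnz hUb] by blast
  have "a = M ** b" by (simp add: b_def matrix_mul_assoc MN)
  also have "\<dots> = c *\<^sub>R (M ** rhoM r 0 0 s)" by (simp add: crs(4) matrix_scalar_ac scalar_matrix_assoc)
  also have "M ** rhoM r 0 0 s = rhoM (r*q' + 0*q) (r*p' + 0*p) (0*q' + s*q) (0*p' + s*p)"
    unfolding M_def by (rule rhoM_mult)
  also have "\<dots> = rho (mat2 (r*q') (r*p') (s*q) (s*p))" by (simp add: rho_mat2)
  finally have "a = c *\<^sub>R rho (mat2 (r*q') (r*p') (s*q) (s*p))" .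
  moreover have "mat2 (r*q') (r*p') (s*q) (s*p) \<in> GL2"
  proof -
    have "det (mat2 (r*q') (r*p') (s*q) (s*p)) = r * s * \<Delta>" by (simp add: det_mat2 \<Delta>_def algebra_simps)
    then show ?thesis using crs dnz by (simp add: GL2_def)
  qed
  ultimately show ?thesis using crs(1) by blast
qed

theorem proposition2p1:
  shows "CH = {c *\<^sub>R rho A | c A. c \<in> {1, -1} \<and> A \<in> GL2}
         \<and> CH \<subseteq> CO32 \<and> CO32 \<subseteq> GL5"
proof (intro conjI)
  show eq: "CH = {c *\<^sub>R rho A | c A. c \<in> {1, -1} \<and> A \<in> GL2}"
  proof
    show "CH \<subseteq> {c *\<^sub>R rho A | c A. c \<in> {1, -1} \<and> A \<in> GL2}" using CH_forward by blast
    show "{c *\<^sub>R rho A | c A. c \<in> {1, -1} \<and> A \<in> GL2} \<subseteq> CH" using rho_props by blast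
  qed
  show "CH \<subseteq> CO32" using CH_forward rho_props by blast
  show "CO32 \<subseteq> GL5" by (auto simp: CO32_def GL5_def)
qed
end
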